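(* For every $m\in\mathbb{N}$ and every real $t$ with $|t|<1$, \[ \left(\frac{\arcsin t}{t}\right)^{m}=1+\sum_{k=1}^{\infty}(-1)^k\frac{Q(m,2k;2)}{\binom{m+2k}{m}}\frac{(2t)^{2k}}{(2k)!}, \] where the left-hand side is defined to be $1$ at $t=0$.
   Context: $s(n,k)$ ($n\ge k\ge 0$) denotes the signed Stirling numbers of the first kind, defined by $\frac{[\ln(1+x)]^k}{k!}=\sum_{n=k}^\infty s(n,k)\frac{x^n}{n!}$ for $|x|<1$; equivalently $\prod_{j=0}^{n-1}(z-j)=\sum_{k=0}^n s(n,k)z^k$. For $m\in\mathbb{N}$, $k\in\mathbb{N}_0$ and $\alpha\in\mathbb{R}$ define \[ Q(m,k;\alpha)=\sum_{\ell=0}^{k}\binom{m+\ell-1}{m-1}\, s(m+k-1,m+\ell-1)\left(\frac{m+k-\alpha}{2}\right)^{\ell}, \] with the convention $0^0=1$. *)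

theory Defs
  imports "HOL-Analysis.Analysis" "HOL-Combinatorics.Stirling"
begin

definition stirling1s :: "nat \<Rightarrow> nat \<Rightarrow> real" where
  "stirling1s n k = (-1) ^ (n - k) * real (stirling n k)"

definition Q :: "nat \<Rightarrow> nat \<Rightarrow> real \<Rightarrow> real" where
  "Q m k \<alpha> = (\<Sum>l = 0..k. real ((m + l - 1) choose (m - 1))
       * stirling1s (m + k - 1) (m + l - 1) * ((real (m + k) - \<alpha>) / 2) ^ l)"

end

theory Submission
  imports Defs
begin

definition Tp :: "nat \<Rightarrow> real poly" where
  "Tp N = (\<Prod>j<N. [: (real N - 1)/2 - real j, 1 :])"

lemma Tp_rec: "Tp (N+2) = [: -((real N + 1)^2/4), 0, 1:] * Tp N"
proof -
  have "Tp (N+2) = [: (real N + 1)/2, 1:] * ((\<Prod>j<N. [: (real N - 1)/2 - real j, 1 :]) * [: -(real N + 1)/2, 1:])"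
  proof -
    have "Tp (N+2) = [: (real (N+2) - 1)/2 - real 0, 1:] * (\<Prod>j<Suc N. [: (real (N+2) - 1)/2 - real (Suc j), 1 :])"
      unfolding Tp_def by (simp only: add_2_eq_Suc' prod.lessThan_Suc_shift)
    also have "(\<Prod>j<Suc N. [: (real (N+2) - 1)/2 - real (Suc j), 1 :]) =
       (\<Prod>j<N. [: (real (N+2) - 1)/2 - real (Suc j), 1 :]) * [: (real (N+2) - 1)/2 - real (Suc N), 1 :]"
      by (rule prod.lessThan_Suc)
    also have "(\<Prod>j<N. [: (real (N+2) - 1)/2 - real (Suc j), 1 :]) = (\<Prod>j<N. [: (real N - 1)/2 - real j, 1 :])"
      by (intro prod.cong refl) (simp add: field_simps)
    also have "(real (N+2) - 1)/2 - real 0 = (real N + 1)/2" by simp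
    also have "(real (N+2) - 1)/2 - real (Suc N) = -(real N + 1)/2" by (simp add: field_simps)
    finally show ?thesis .
  qed
  also have "\<dots> = ([: (real N + 1)/2, 1:] * [: -(real N + 1)/2, 1:]) * Tp N"
    unfolding Tp_def by (simp only: ac_simps)
  also have "[: (real N + 1)/2, 1:] * [: -(real N + 1)/2, 1:] = [: -((real N + 1)^2/4), 0, 1:]"
    by (simp add: power2_eq_square field_simps)
  finally show ?thesis .
qed

lemma prod_stirling:
  fixes x :: real
  shows "(\<Prod>j<N. x - real j) = (\<Sum>k\<le>N. stirling1s N k * x ^ k)"
proof -
  have "(\<Prod>j<N. x - real j) = (-1)^N * (\<Prod>j<N. -x + real j)"
    by (induction N) (auto simp: algebra_simps)
  also have "(\<Prod>j<N. -x + real j) = pochhammer (-x) N"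
    by (simp add: pochhammer_prod atLeast0LessThan algebra_simps)
  also have "\<dots> = (\<Sum>k\<le>N. real (stirling N k) * (-x) ^ k)"
    by (simp add: stirling_pochhammer)
  also have "(-1)^N * \<dots> = (\<Sum>k\<le>N. stirling1s N k * x ^ k)"
    unfolding sum_distrib_left
  proof (intro sum.cong refl)
    fix k assume "k \<in> {..N}"
    then have "(-1::real)^N = (-1)^(N-k) * (-1)^k"
      by (simp flip: power_add)
    then show "(-1)^N * (real (stirling N k) * (-x) ^ k) = stirling1s N k * x ^ k"
      by (simp add: stirling1s_def power_minus[of x])
  qed
  finally show ?thesis .
qed

lemma Tp_expand: "Tp N = (\<Sum>k\<le>N. smult (stirling1s N k) ([: (real N - 1)/2, 1:] ^ k))"
proof (rule poly_ext)
  fix w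
  have "poly (Tp N) w = (\<Prod>j<N. (w + (real N - 1)/2) - real j)"
    unfolding Tp_def by (simp add: poly_prod algebra_simps)
  also have "\<dots> = (\<Sum>k\<le>N. stirling1s N k * (w + (real N - 1)/2) ^ k)"
    by (rule prod_stirling)
  finally show "poly (Tp N) w = poly (\<Sum>k\<le>N. smult (stirling1s N k) ([: (real N - 1)/2, 1:] ^ k)) w"
    by (simp add: poly_sum algebra_simps)
qed

lemma coeff_lin_pow: "coeff ([:a, 1:] ^ n) i = of_nat (n choose i) * (a::real) ^ (n - i)"
proof (cases "i \<le> n")
  case True then show ?thesis by (simp add: coeff_linear_poly_power)
next
  case False
  then have "degree ([:a, 1:] ^ n) < i" by (simp add: degree_power_eq)
  then show ?thesis using False by (simp add: coeff_eq_0)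
qed

lemma coeff_Tp: "coeff (Tp N) i = (\<Sum>k\<le>N. stirling1s N k * (real (k choose i) * ((real N - 1)/2) ^ (k - i)))"
  unfolding Tp_expand by (simp add: coeff_sum coeff_lin_pow)

lemma Q_Tp:
  assumes "m \<ge> 1"
  shows "Q m (2*n) 2 = coeff (Tp (m + 2*n - 1)) (m - 1)"
proof -
  define N where "N = m + 2*n - 1"
  define c where "c = (real N - 1)/2"
  have c: "(real (m + 2*n) - 2)/2 = c" using assms by (simp add: c_def N_def field_simps)
  define g where "g k = stirling1s N k * (real (k choose (m-1)) * c ^ (k - (m-1)))" for k
  have "coeff (Tp N) (m-1) = (\<Sum>k\<le>N. g k)" unfolding coeff_Tp g_def c_def ..
  also have "\<dots> = (\<Sum>k=0 + (m-1)..2*n + (m-1). g k)"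
    by (rule sum.mono_neutral_right) (use assms in \<open>auto simp: g_def N_def\<close>)
  also have "\<dots> = (\<Sum>l=0..2*n. g (l + (m-1)))"
    by (rule sum.shift_bounds_cl_nat_ivl)
  also have "\<dots> = Q m (2*n) 2"
    unfolding Q_def c
    by (intro sum.cong refl) (use assms in \<open>simp add: g_def N_def algebra_simps\<close>)
  finally show ?thesis by (simp add: N_def)
qed

lemma quad_mult: "[: a, 0, 1 :] * p = smult a p + monom 1 2 * (p :: real poly)"
  by (simp add: monom_altdef algebra_simps power2_eq_square)

lemma Q_rec:
  assumes "m \<ge> 1"
  shows "Q m (2 * Suc n) 2 = (if m \<ge> 3 then Q (m-2) (2 * Suc n) 2 else 0) - (real (m+2*n))^2/4 * Q m (2*n) 2"
proof -
  define N where "N = m + 2*n - 1"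
  have RN: "real N + 1 = real (m + 2*n)" using assms by (simp add: N_def)
  have "Q m (2 * Suc n) 2 = coeff (Tp (N + 2)) (m - 1)"
    using Q_Tp[OF assms, of "Suc n"] assms by (simp add: N_def)
  also have "\<dots> = - ((real N + 1)^2/4) * coeff (Tp N) (m-1) + (if m - 1 < 2 then 0 else coeff (Tp N) (m - 1 - 2))"
    unfolding Tp_rec quad_mult coeff_add coeff_smult coeff_monom_mult by simp
  also have "(if m - 1 < 2 then 0 else coeff (Tp N) (m - 1 - 2)) = (if m \<ge> 3 then Q (m-2) (2 * Suc n) 2 else 0)"
  proof (cases "m \<ge> 3")
    case True
    then have "Q (m-2) (2 * Suc n) 2 = coeff (Tp ((m-2) + 2 * Suc n - 1)) (m - 2 - 1)"
      by (intro Q_Tp) auto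
    also have "(m-2) + 2 * Suc n - 1 = N" using True by (simp add: N_def)
    finally show ?thesis using True by (simp add: numeral_eq_Suc)
  qed auto
  also have "coeff (Tp N) (m-1) = Q m (2*n) 2" using Q_Tp[OF assms, of n] by (simp add: N_def)
  finally show ?thesis unfolding RN by simp
qed

lemma Q_0: "m \<ge> 1 \<Longrightarrow> Q m 0 2 = 1"
  by (simp add: Q_def stirling1s_def)

definition acoef :: "nat \<Rightarrow> nat \<Rightarrow> real" where
  "acoef m j = (if m = 0 then (if j = 0 then 1 else 0)
     else if m \<le> j \<and> even (j - m) then (-4)^((j-m) div 2) * fact m / fact j * Q m (j - m) 2 else 0)"

lemma acoef_main:
  assumes "m \<ge> 1"
  shows "acoef m (m + 2*n) = (-4)^n * fact m / fact (m + 2*n) * Q m (2*n) 2"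
  using assms by (simp add: acoef_def)

lemma acoef_rec:
  "real ((j+2)*(j+1)) * acoef m (j+2) = real (j^2) * acoef m j + real (m*(m-1)) * acoef (m-2) j"
proof (cases "m = 0")
  case True then show ?thesis by (simp add: acoef_def)
next
  case m: False
  show ?thesis
  proof (cases "m \<le> j+2 \<and> even (j+2-m)")
    case False
    have 1: "acoef m (j+2) = 0" using False m unfolding acoef_def by auto
    have 2: "acoef m j = 0" using False m by (auto simp: acoef_def)
    have 3: "real (m*(m-1)) * acoef (m-2) j = 0"
    proof (cases "m \<le> 2")
      case True
      then consider "m = 1" | "m = 2" using m by linarith
      then show ?thesis using False by cases (auto simp: acoef_def intro: Nat.gr0I)
    next
      case False': False
      then have "j - (m-2) = j + 2 - m" by simp
      then show ?thesis using False False' by (auto simp: acoef_def)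
    qed
    show ?thesis using 1 2 3 by simp
  next
    case True
    then obtain n where n: "j + 2 = m + 2*n"
      by (metis evenE le_add_diff_inverse)
    show ?thesis
    proof (cases n)
      case 0
      then have mj: "m = j + 2" using n by simp
      have "acoef (m-2) j = 1"
      proof (cases "m = 2")
        case True then show ?thesis using mj by (simp add: acoef_def)
      next
        case False then show ?thesis using mj by (simp add: acoef_def Q_0)
      qed
      moreover have "acoef m (j+2) = 1" using mj by (simp add: acoef_def Q_0)
      moreover have "acoef m j = 0" using mj by (simp add: acoef_def)
      ultimately show ?thesis using mj by simp
    next
      case (Suc k)
      have j: "j = m + 2*k" using n Suc by simp
      have m1: "m \<ge> 1" using m by simp
      have A: "acoef m j = (-4)^k * fact m / fact j * Q m (2*k) 2"
        using acoef_main[OF m1, of k] j by simp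
      have B: "acoef m (j+2) = (-4)^(Suc k) * fact m / fact (j+2) * Q m (2*Suc k) 2"
        using acoef_main[OF m1, of "Suc k"] j by simp
      have fj: "fact (j+2) = real ((j+2)*(j+1)) * fact j"
        by (simp add: algebra_simps)
      have C: "real (m*(m-1)) * acoef (m-2) j =
          (if m \<ge> 3 then (-4)^(Suc k) * fact m / fact j * Q (m-2) (2 * Suc k) 2 else 0)"
      proof (cases "m \<ge> 3")
        case True
        have jj: "j = (m-2) + 2 * Suc k" using j True by simp
        have "acoef (m-2) j = (-4)^(Suc k) * fact (m-2) / fact j * Q (m-2) (2 * Suc k) 2"
          unfolding jj by (rule acoef_main) (use True in simp)
        moreover have "fact m = real (m*(m-1)) * fact (m-2)"
        proof -
          obtain p where "m = Suc (Suc p)" using True by (metis Suc_le_D numeral_3_eq_3 le_SucE Suc_n_not_le_n)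
          then show ?thesis by (simp add: algebra_simps)
        qed
        ultimately show ?thesis using True by simp
      next
        case False
        then consider "m = 1" | "m = 2" using m by linarith
        then show ?thesis using j by cases (auto simp: acoef_def)
      qed
      have R: "Q m (2 * Suc k) 2 = (if m \<ge> 3 then Q (m-2) (2 * Suc k) 2 else 0) - (real j)^2/4 * Q m (2*k) 2"
        using Q_rec[OF m1, of k] j by simp
      have key0: "d * ((-4)^(Suc k) * M / (d * F) * (X - J/4 * Y))
         = J * ((-4)^k * M / F * Y) + (-4)^(Suc k) * M / F * X" if "F \<noteq> 0" "d \<noteq> 0" for X Y M F d J :: real
        using that by (simp add: field_simps)
      have key: "real ((j+2)*(j+1)) * ((-4)^(Suc k) * M / (real ((j+2)*(j+1)) * F) * (X - (real j)^2/4 * Y))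
         = real (j^2) * ((-4)^k * M / F * Y) + (-4)^(Suc k) * M / F * X" if "F \<noteq> 0" for X Y M F :: real
      proof -
        have "real ((j+2)*(j+1)) \<noteq> 0" by (simp only: of_nat_eq_0_iff) simp
        from key0[OF that this, of M X "(real j)^2" Y] show ?thesis by (simp only: of_nat_power)
      qed
      show ?thesis
      proof (cases "m \<ge> 3")
        case True
        show ?thesis unfolding A B C fj R if_P[OF True] by (rule key) simp
      next
        case False
        show ?thesis unfolding A B C fj R if_not_P[OF False]
          using key[of "fact j" "fact m" 0 "Q m (2*k) 2"] by (simp only: mult_zero_right add_0_right fact_nonzero not_False_eq_True simp_thms)
      qed
    qed
  qed
qed

lemma acoef_0: "m \<ge> 1 \<Longrightarrow> acoef m 0 = 0"
  by (simp add: acoef_def)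

lemma acoef_1': "m \<ge> 1 \<Longrightarrow> acoef m (Suc 0) = (if m = 1 then 1 else 0)"
proof (cases "m = 1")
  case True then show ?thesis by (simp add: acoef_def Q_0)
next
  case False
  assume "m \<ge> 1"
  with False have "\<not> m \<le> Suc 0" by simp
  then show ?thesis using False by (simp add: acoef_def)
qed

lemma acoef_1: "m \<ge> 1 \<Longrightarrow> acoef m 1 = (if m = 1 then 1 else 0)"
  using acoef_1'[of m] by (simp only: One_nat_def)

lemma acoef_step:
  "acoef m (j+2) = (real (j^2) * acoef m j + real (m*(m-1)) * acoef (m-2) j) / real ((j+2)*(j+1))"
proof -
  have "real ((j+2)*(j+1)) \<noteq> 0" by (simp only: of_nat_eq_0_iff) simp
  then show ?thesis using acoef_rec[of j m] by (simp add: field_simps)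
qed

lemma fact_m2: "m \<ge> 2 \<Longrightarrow> (fact m :: real) = real (m*(m-1)) * fact (m-2)"
proof -
  assume "m \<ge> 2"
  then have "m = Suc (Suc (m - 2))" by linarith
  then obtain p where "m = Suc (Suc p)" by blast
  then show ?thesis by (simp add: algebra_simps)
qed

lemma acoef_bound: "\<bar>acoef m j\<bar> \<le> fact m * (real j + 1) ^ m"
proof (induction m arbitrary: j rule: less_induct)
  case (less m)
  note IHm = less.IH
  show ?case
  proof (cases "m = 0")
    case True then show ?thesis by (simp add: acoef_def)
  next
    case m: False
    show ?thesis
    proof (induction j rule: less_induct)
      case (less j)
      show ?case
      proof (cases "j < 2")
        case True
        have "\<bar>acoef m j\<bar> \<le> 1"
        proof -
          consider "j = 0" | "j = 1" using True by linarith
          then show ?thesis using m by cases (simp_all add: acoef_0 acoef_1')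
        qed
        also have "1 \<le> fact m * (real j + 1) ^ m"
          using mult_mono[of 1 "fact m" 1 "(real j + 1) ^ m"] by (simp add: one_le_power)
        finally show ?thesis .
      next
        case False
        then obtain i where j: "j = i + 2" by (metis add.commute le_Suc_ex not_less)
        define F where "F = (fact m :: real)"
        define p where "p = (real i + 1) ^ m"
        have F0: "F \<ge> 0" by (simp add: F_def)
        have IHi: "\<bar>acoef m i\<bar> \<le> F * p" using less.IH[of i] j by (simp add: F_def p_def)
        have B2: "real (m*(m-1)) * \<bar>acoef (m-2) i\<bar> \<le> F * p"
        proof (cases "m \<ge> 2")
          case True
          have "\<bar>acoef (m-2) i\<bar> \<le> fact (m-2) * (real i + 1) ^ (m-2)"
            using True by (intro IHm) auto  
          also have "\<dots> \<le> fact (m-2) * p" unfolding p_def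
            by (intro mult_left_mono power_increasing) auto
          finally have "real (m*(m-1)) * \<bar>acoef (m-2) i\<bar> \<le> real (m*(m-1)) * (fact (m-2) * p)"
            by (intro mult_left_mono) auto
          also have "\<dots> = F * p" using fact_m2[OF True] by (simp add: F_def)
          finally show ?thesis .
        next
          case False
          then have "m = 1" using m by simp
          then show ?thesis by (simp add: F_def p_def)
        qed
        have "\<bar>acoef m j\<bar> = \<bar>real (i^2) * acoef m i + real (m*(m-1)) * acoef (m-2) i\<bar> / real ((i+2)*(i+1))"
          unfolding j acoef_step by simp
        also have "\<dots> \<le> (real (i^2) * (F * p) + F * p) / real ((i+2)*(i+1))"
        proof (intro divide_right_mono)
          have "\<bar>real (i^2) * acoef m i + real (m*(m-1)) * acoef (m-2) i\<bar>
             \<le> real (i^2) * \<bar>acoef m i\<bar> + real (m*(m-1)) * \<bar>acoef (m-2) i\<bar>"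
            by (rule order.trans[OF abs_triangle_ineq]) (simp add: abs_mult)
          also have "\<dots> \<le> real (i^2) * (F * p) + F * p"
            by (intro add_mono mult_left_mono IHi B2) auto
          finally show "\<bar>real (i^2) * acoef m i + real (m*(m-1)) * acoef (m-2) i\<bar> \<le> real (i^2) * (F * p) + F * p" .
        qed simp
        also have "\<dots> \<le> F * p"
        proof -
          have "real (i^2) + 1 \<le> real ((i+2)*(i+1))" by (simp add: power2_eq_square algebra_simps)
          then have "(real (i^2) + 1) * (F * p) \<le> real ((i+2)*(i+1)) * (F * p)"
            by (intro mult_right_mono) (auto simp: F0 p_def)
          moreover have "real ((i+2)*(i+1)) > 0" by (simp only: of_nat_0_less_iff) simp
          ultimately show ?thesis by (simp add: field_simps)
        qed
        also have "\<dots> \<le> fact m * (real j + 1) ^ m" unfolding F_def p_def j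
          by (intro mult_left_mono power_mono) auto
        finally show ?thesis .
      qed
    qed
  qed
qed

lemma conv_radius_poly_bound: "conv_radius (\<lambda>j. fact m * (real j + 1) ^ m :: real) = 1"
proof (rule conv_radius_ratio_limit_nonzero[of _ 1])
  have "(\<lambda>n. real (Suc n) / real (Suc (Suc n))) \<longlonglongrightarrow> 1"
    by (rule LIMSEQ_Suc[OF LIMSEQ_n_over_Suc_n])
  moreover have "real (Suc n) / real (Suc (Suc n)) = (real n + 1) / (real n + 2)" for n by (simp add: add.commute)
  ultimately have "(\<lambda>n. (real n + 1) / (real n + 2)) \<longlonglongrightarrow> 1" by simp
  then have "(\<lambda>n. ((real n + 1) / (real n + 2)) ^ m) \<longlonglongrightarrow> 1 ^ m" by (intro tendsto_power)
  moreover have "norm (fact m * (real n + 1) ^ m :: real) / norm (fact m * (real (Suc n) + 1) ^ m) = ((real n + 1) / (real n + 2)) ^ m" for n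
    by (simp add: power_divide add_ac)
  ultimately show "(\<lambda>n. norm (fact m * (real n + 1) ^ m :: real) / norm (fact m * (real (Suc n) + 1) ^ m)) \<longlonglongrightarrow> 1"
    by simp
qed simp_all

lemma conv_radius_acoef: "conv_radius (acoef m) \<ge> 1"
proof (rule conv_radius_geI_ex')
  fix r :: real assume r: "0 < r" "ereal r < 1"
  have "summable (\<lambda>j. fact m * (real j + 1) ^ m * r ^ j)"
    by (rule summable_in_conv_radius) (use r in \<open>simp add: conv_radius_poly_bound\<close>)
  then show "summable (\<lambda>j. acoef m j * of_real r ^ j)"
  proof (rule summable_comparison_test[rotated], intro exI allI impI)
    fix n
    show "norm (acoef m n * of_real r ^ n) \<le> fact m * (real n + 1) ^ m * r ^ n"
      using r acoef_bound[of m n] by (simp add: abs_mult mult_right_mono)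
  qed
qed

definition Fm :: "nat \<Rightarrow> real fps" where "Fm m = Abs_fps (acoef m)"

lemma Fm_radius: "fps_conv_radius (Fm m) \<ge> 1"
  unfolding fps_conv_radius_def Fm_def using conv_radius_acoef by simp

lemma in_radius:
  fixes t :: real
  assumes "\<bar>t\<bar> < 1" "fps_conv_radius F \<ge> 1"
  shows "norm t < fps_conv_radius F"
proof -
  have "ereal (norm t) < 1" using assms(1) by simp
  then show ?thesis using assms(2) by (rule less_le_trans)
qed

lemma rad_D: "fps_conv_radius (fps_deriv (Fm m)) \<ge> 1"
  using Fm_radius[of m] fps_conv_radius_deriv[of "Fm m"] by (rule order.trans)

lemma rad_DD: "fps_conv_radius (fps_deriv (fps_deriv (Fm m))) \<ge> 1"
  using rad_D[of m] fps_conv_radius_deriv[of "fps_deriv (Fm m)"] by (rule order.trans)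

lemma fps_ode:
  "(1 - fps_X^2) * fps_deriv (fps_deriv (Fm m)) - fps_X * fps_deriv (Fm m)
     = fps_const (real (m*(m-1))) * Fm (m-2)"
proof (rule fps_ext)
  fix n
  have L: "fps_nth ((1 - fps_X^2) * fps_deriv (fps_deriv (Fm m)) - fps_X * fps_deriv (Fm m)) n
       = real ((n+2)*(n+1)) * acoef m (n+2) - real (n^2) * acoef m n"
  proof -
    have e: "(1 - fps_X^2) * fps_deriv (fps_deriv (Fm m)) - fps_X * fps_deriv (Fm m)
        = fps_deriv (fps_deriv (Fm m)) - fps_X^2 * fps_deriv (fps_deriv (Fm m)) - fps_X * fps_deriv (Fm m)"
      by (simp add: algebra_simps)
    show ?thesis
    proof (cases "n < 2")
      case True
      then consider "n = 0" | "n = 1" by linarith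
      then show ?thesis unfolding e
        by cases (simp_all add: fps_X_power_mult_nth Fm_def algebra_simps)
    next
      case False
      then obtain k where k: "n = k + 2" by (metis add.commute le_Suc_ex not_less)
      show ?thesis unfolding e k
        by (simp add: fps_X_power_mult_nth Fm_def algebra_simps power2_eq_square)
    qed
  qed
  show "fps_nth ((1 - fps_X^2) * fps_deriv (fps_deriv (Fm m)) - fps_X * fps_deriv (Fm m)) n
       = fps_nth (fps_const (real (m*(m-1))) * Fm (m-2)) n"
    unfolding L using acoef_rec[of n m] by (simp add: Fm_def)
qed

lemma ode_eval:
  fixes t :: real
  assumes t: "\<bar>t\<bar> < 1"
  shows "(1 - t^2) * eval_fps (fps_deriv (fps_deriv (Fm m))) t - t * eval_fps (fps_deriv (Fm m)) t
         = real (m*(m-1)) * eval_fps (Fm (m-2)) t"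
proof -
  let ?D2 = "fps_deriv (fps_deriv (Fm m))" and ?D1 = "fps_deriv (Fm m)"
  have r2: "norm t < fps_conv_radius ?D2" by (rule in_radius[OF t rad_DD])
  have r1: "norm t < fps_conv_radius ?D1" by (rule in_radius[OF t rad_D])
  have r0: "norm t < fps_conv_radius (Fm (m-2))" by (rule in_radius[OF t Fm_radius])
  have rp: "norm t < fps_conv_radius (1 - fps_X^2 :: real fps)"
    by (rule less_le_trans[OF _ fps_conv_radius_diff]) simp
  have ra: "norm t < fps_conv_radius ((1 - fps_X^2) * ?D2)"
    by (rule less_le_trans[OF _ fps_conv_radius_mult]) (use rp r2 in simp)
  have rb: "norm t < fps_conv_radius (fps_X * ?D1)"
    by (rule less_le_trans[OF _ fps_conv_radius_mult]) (use r1 in simp)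
  have "eval_fps ((1 - fps_X^2) * ?D2 - fps_X * ?D1) t = (1 - t^2) * eval_fps ?D2 t - t * eval_fps ?D1 t"
    using ra rb rp r2 r1 by (simp add: eval_fps_diff eval_fps_mult)
  moreover have "eval_fps (fps_const (real (m*(m-1))) * Fm (m-2)) t = real (m*(m-1)) * eval_fps (Fm (m-2)) t"
    using r0 by (simp add: eval_fps_mult)
  ultimately show ?thesis using fps_ode[of m] by simp
qed

lemma aux:
  fixes r x g1 g2 M M1 a :: real
  assumes r: "r > 0" and rr: "r * r = 1 - x^2" and z: "(1 - x^2) * g2 - x * g1 - (M * M1) * a = 0"
  shows "(-x / r) * g1 + r * g2 - M * (M1 * (inverse r * a)) = 0"
proof -
  have "r * ((-x / r) * g1 + r * g2 - M * (M1 * (inverse r * a))) = -x * g1 + (r * r) * g2 - M * M1 * a"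
    using r by (simp add: field_simps)
  also have "\<dots> = 0" unfolding rr using z by simp
  finally show ?thesis using r by simp
qed

lemma Fm_0: "Fm 0 = 1"
  by (rule fps_ext) (simp add: Fm_def acoef_def)

lemma G_eq: "\<bar>t\<bar> < 1 \<Longrightarrow> eval_fps (Fm m) t = arcsin t ^ m"
proof (induction m arbitrary: t rule: less_induct)
  case (less m)
  show ?case
  proof (cases "m = 0")
    case True then show ?thesis by (simp add: Fm_0)
  next
    case m0: False
    define S where "S = {-1<..<(1::real)}"
    let ?G = "eval_fps (Fm m)" and ?G1 = "eval_fps (fps_deriv (Fm m))"
      and ?G2 = "eval_fps (fps_deriv (fps_deriv (Fm m)))"
    have IH: "real (m*(m-1)) * eval_fps (Fm (m-2)) x = real (m*(m-1)) * arcsin x ^ (m-2)"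
      if "\<bar>x\<bar> < 1" for x
    proof (cases "m \<ge> 2")
      case True then show ?thesis using less.IH[of "m-2" x] that by simp
    next
      case False then have "m = 1" using m0 by simp
      then show ?thesis by simp
    qed
    have sq: "sqrt (1 - x^2) > 0" if "\<bar>x\<bar> < 1" for x :: real
    proof -
      have "x^2 < 1" using that by (simp add: abs_square_less_1)
      then show ?thesis by simp
    qed
    define \<psi> where "\<psi> x = sqrt (1 - x^2) * ?G1 x - real m * arcsin x ^ (m-1)" for x
    have d\<psi>: "(\<psi> has_field_derivative 0) (at x within S)" if "x \<in> S" for x
    proof -
      have x: "\<bar>x\<bar> < 1" "-1 < x" "x < 1" using that by (auto simp: S_def)
      have s: "sqrt (1 - x^2) > 0" using sq[OF x(1)] .
      have h1: "((\<lambda>x. sqrt (1 - x^2)) has_real_derivative (-x / sqrt (1 - x^2))) (at x)"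
        using s by (auto intro!: derivative_eq_intros simp: field_simps)
      have h2: "(?G1 has_real_derivative ?G2 x) (at x)"
        by (rule has_field_derivative_eval_fps) (rule in_radius[OF x(1) rad_D])
      have h3: "((\<lambda>x. arcsin x ^ (m-1)) has_real_derivative
                  (real (m-1) * (inverse (sqrt (1 - x^2)) * arcsin x ^ (m-2)))) (at x)"
        using DERIV_power[OF DERIV_arcsin[OF x(2,3)], of "m-1"] by (simp add: diff_diff_left numeral_2_eq_2)
      have D: "(\<psi> has_real_derivative
           ((-x / sqrt (1 - x^2)) * ?G1 x + sqrt (1 - x^2) * ?G2 x
             - real m * (real (m-1) * (inverse (sqrt (1 - x^2)) * arcsin x ^ (m-2))))) (at x)"
      proof -
        have hm: "((\<lambda>x. sqrt (1 - x^2) * ?G1 x) has_real_derivative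
             (-x / sqrt (1 - x^2)) * ?G1 x + sqrt (1 - x^2) * ?G2 x) (at x)"
          using DERIV_mult[OF h1 h2] by (simp add: algebra_simps)
        show ?thesis unfolding \<psi>_def by (intro DERIV_diff hm DERIV_cmult h3)
      qed
      have rr: "sqrt (1 - x^2) * sqrt (1 - x^2) = 1 - x^2"
        using s by (simp add: real_sqrt_mult_self)
      have z: "(1 - x^2) * ?G2 x - x * ?G1 x - (real m * real (m-1)) * arcsin x ^ (m-2) = 0"
        using ode_eval[OF x(1), of m] IH[OF x(1)] by simp
      have "((-x / sqrt (1 - x^2)) * ?G1 x + sqrt (1 - x^2) * ?G2 x
             - real m * (real (m-1) * (inverse (sqrt (1 - x^2)) * arcsin x ^ (m-2)))) = 0"
        by (rule aux[OF s rr z])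
      with D show ?thesis by (simp add: has_field_derivative_at_within)
    qed
    obtain c where c: "\<And>x. x \<in> S \<Longrightarrow> \<psi> x = c"
      using has_field_derivative_zero_constant[of S \<psi>] d\<psi> by (auto simp: S_def)
    have "\<psi> 0 = 0"
      using m0 by (cases "m = 1") (simp_all add: \<psi>_def eval_fps_at_0 Fm_def acoef_1')
    then have c0: "c = 0" using c[of 0] by (simp add: S_def)
    define \<phi> where "\<phi> x = ?G x - arcsin x ^ m" for x
    have d\<phi>: "(\<phi> has_field_derivative 0) (at x within S)" if "x \<in> S" for x
    proof -
      have x: "\<bar>x\<bar> < 1" "-1 < x" "x < 1" using that by (auto simp: S_def)
      have s: "sqrt (1 - x^2) > 0" using sq[OF x(1)] .
      have h2: "(?G has_real_derivative ?G1 x) (at x)"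
        by (rule has_field_derivative_eval_fps) (rule in_radius[OF x(1) Fm_radius])
      have h3: "((\<lambda>x. arcsin x ^ m) has_real_derivative
                  (real m * arcsin x ^ (m-1) * inverse (sqrt (1 - x^2)))) (at x)"
        using DERIV_power[OF DERIV_arcsin[OF x(2,3)], of m] by (simp add: mult_ac)
      have D: "(\<phi> has_real_derivative (?G1 x - real m * arcsin x ^ (m-1) * inverse (sqrt (1 - x^2)))) (at x)"
        unfolding \<phi>_def by (intro DERIV_diff h2 h3)
      have "\<psi> x = 0" using c[OF that] c0 by simp
      then have "sqrt (1 - x^2) * ?G1 x = real m * arcsin x ^ (m-1)" by (simp add: \<psi>_def)
      then have "?G1 x - real m * arcsin x ^ (m-1) * inverse (sqrt (1 - x^2)) = 0"
        using s by (simp add: field_simps)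
      with D show ?thesis by (simp add: has_field_derivative_at_within)
    qed
    obtain c' where c': "\<And>x. x \<in> S \<Longrightarrow> \<phi> x = c'"
      using has_field_derivative_zero_constant[of S \<phi>] d\<phi> by (auto simp: S_def)
    have "\<phi> 0 = 0"
      using m0 by (simp add: \<phi>_def eval_fps_at_0 Fm_def acoef_0)
    then have "c' = 0" using c'[of 0] by (simp add: S_def)
    then have "\<phi> t = 0" using c'[of t] less.prems by (auto simp: S_def abs_less_iff)
    then show ?thesis by (simp add: \<phi>_def)
  qed
qed

theorem theorem2p1:
  fixes m :: nat and t :: real
  assumes "m \<ge> 1" and "\<bar>t\<bar> < 1"
  shows "(\<lambda>j. let k = Suc j in
            (-1) ^ k * Q m (2 * k) 2 / real ((m + 2 * k) choose m)
              * (2 * t) ^ (2 * k) / fact (2 * k))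
         sums ((if t = 0 then 1 else (arcsin t / t) ^ m) - 1)"
proof -
  define h where "h k = (-1) ^ k * Q m (2 * k) 2 / real ((m + 2 * k) choose m)
              * (2 * t) ^ (2 * k) / fact (2 * k)" for k
  have fun_eq: "(\<lambda>j. let k = Suc j in
            (-1) ^ k * Q m (2 * k) 2 / real ((m + 2 * k) choose m)
              * (2 * t) ^ (2 * k) / fact (2 * k)) = (\<lambda>j. h (Suc j))"
    by (rule ext) (simp only: h_def Let_def)
  show ?thesis
  proof (cases "t = 0")
    case True
    then have "(\<lambda>j. h (Suc j)) = (\<lambda>j. 0)" by (simp add: h_def)
    then show ?thesis unfolding fun_eq using True by simp
  next
    case t0: False
    have "(\<lambda>j. fps_nth (Fm m) j * t ^ j) sums eval_fps (Fm m) t"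
      by (rule sums_eval_fps) (rule in_radius[OF assms(2) Fm_radius])
    then have s1: "(\<lambda>j. acoef m j * t ^ j) sums (arcsin t ^ m)"
      using G_eq[OF assms(2), of m] by (simp add: Fm_def)
    have sm: "strict_mono (\<lambda>n. m + 2 * n)" by (rule strict_monoI) simp
    have s2: "(\<lambda>n. acoef m (m + 2*n) * t ^ (m + 2*n)) sums (arcsin t ^ m)"
    proof (rule sums_mono_reindex[OF sm, THEN iffD2, OF _ s1])
      fix j assume j: "j \<notin> range (\<lambda>n. m + 2 * n)"
      show "acoef m j * t ^ j = 0"
      proof (cases "m \<le> j \<and> even (j - m)")
        case True
        then have "j = m + 2 * ((j - m) div 2)" by auto
        then show ?thesis using j by blast
      next
        case False then have "acoef m j = 0" using assms(1) unfolding acoef_def by auto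
        then show ?thesis by simp
      qed
    qed
    have s3: "(\<lambda>n. acoef m (m + 2*n) * t ^ (m + 2*n) / t ^ m) sums (arcsin t ^ m / t ^ m)"
      by (rule sums_divide[OF s2])
    have eq: "acoef m (m + 2*n) * t ^ (m + 2*n) / t ^ m = h n" for n
    proof -
      have b: "real ((m + 2 * n) choose m) = fact (m + 2*n) / (fact m * fact (2*n))"
        by (subst binomial_fact) auto
      have p: "(2 * t) ^ (2 * n) = 4 ^ n * t ^ (2 * n)"
        by (simp add: power_mult power_mult_distrib)
      have p2: "(-4::real) ^ n = (-1) ^ n * 4 ^ n"
        by (simp flip: power_mult_distrib)
      show ?thesis
        unfolding acoef_main[OF assms(1)] h_def b p p2 using t0
        by (simp add: power_add field_simps)
    qed
    have s4: "h sums ((arcsin t / t) ^ m)"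
      using s3 unfolding eq by (simp add: power_divide)
    have h0: "h 0 = 1" by (simp add: h_def Q_0[OF assms(1)])
    have "(\<lambda>j. h (Suc j)) sums ((arcsin t / t) ^ m - 1)"
      using sums_Suc_iff[of h "(arcsin t / t) ^ m - 1"] s4 h0 by simp
    then show ?thesis unfolding fun_eq using t0 by simp
  qed
qed

end
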